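(* Let $k\ge 0$, let $\mathfrak N\in\{\mathfrak N_1,\mathfrak N_2\}$, let $0=t^0<t^1<\dots<t^N$, and let $(\underline{\boldsymbol A}_h^0,\underline{\boldsymbol E}_h^0)\in(\underline X^{k,\mathfrak g}_{\mathrm{curl},h})^2$ be arbitrary initial data. Suppose that the families $(\underline{\boldsymbol A}_h^n,\underline{\boldsymbol E}_h^n,\underline\lambda_h^n)_n$, with $(\underline{\boldsymbol A}_h^n,\underline{\boldsymbol E}_h^n,\underline\lambda_h^n)\in(\underline X^{k,\mathfrak g}_{\mathrm{curl},h})^2\times\underline X^{k,\mathfrak g}_{\mathrm{grad},h}$, solve the scheme (S) described in the context (with this choice of $\mathfrak N$). Then, for every $\underline q_h\in\underline X^{k,\mathfrak g}_{\mathrm{grad},h}$, the quantity $$\mathfrak C^n(\underline q_h)\coloneq(\underline{\boldsymbol E}_h^n,\underline G_h^{k}\underline q_h)_{\mathrm{curl},\mathfrak g,h}+\int_U\big\langle \boldsymbol P_{\mathrm{curl},h}\underline{\boldsymbol E}_h^n,[\boldsymbol P_{\mathrm{curl},h}\underline{\boldsymbol A}_h^n,P_{\mathrm{grad},h}\underline q_h]\big\rangle$$ is independent of $n$.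
   Context: Geometry and mesh. $U\subset\mathbb R^3$ is a polyhedral domain with a mesh $\mathcal M_h=\mathcal T_h\cup\mathcal F_h\cup\mathcal E_h\cup\mathcal V_h$ of polyhedral elements (partitioning $U$), polygonal faces, edges and vertices, each topologically trivial. For a mesh entity $\mathsf P$, $\mathcal F_{\mathsf P},\mathcal E_{\mathsf P},\mathcal V_{\mathsf P}$ are its faces, edges, vertices. Each face $F$ has a fixed unit normal $\boldsymbol n_F$, each edge $E$ a fixed unit tangent $\boldsymbol t_E$. For $T\in\mathcal T_h$, $F\in\mathcal F_T$: $\omega_{TF}=+1$ if $\boldsymbol n_F$ points out of $T$, $-1$ otherwise. For $F\in\mathcal F_h$, $E\in\mathcal E_F$: $\omega_{FE}=+1$ if $\boldsymbol t_E$ points counter-clockwise along $\partial F$ w.r.t. the orientation induced by $\boldsymbol n_F$, $-1$ otherwise; $\boldsymbol n_{FE}$ is the unit vector with $(\boldsymbol t_E,\boldsymbol n_{FE},\boldsymbol n_F)$ right-handed. For $E\in\mathcal E_h$, $V\in\mathcal V_E$: $\omega_{EV}=+1$ if $\boldsymbol t_E$ points towards $V$, $-1$ otherwise. On a face, $\nabla_F,\mathrm{div}_F$ are tangential gradient/divergence and $\mathrm{\mathbf{rot}}_F r$ is the rotation of $\nabla_F r$ by $-\pi/2$ in the plane of $F$; on an edge, $r'$ is the derivative along $\boldsymbol t_E$. Polynomials. $\mathcal P^\ell(\mathsf P)$: polynomials of total degree $\le\ell$ on $\mathsf P$ ($\{0\}$ if $\ell<0$); $\mathcal P^{0,\ell}(\mathsf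 P)$ those with zero mean; $\boldsymbol{\mathcal P}^\ell(T)=\mathcal P^\ell(T)^3$; $\boldsymbol{\mathcal P}^\ell(F)$ the tangent-valued vector polynomials on $F$. With fixed points $\boldsymbol x_F\in F$, $\boldsymbol x_T\in T$: $\mathcal R^\ell(F)=\mathrm{\mathbf{rot}}_F\mathcal P^{\ell+1}(F)$, $\mathcal R^{c,\ell}(F)=(\boldsymbol x-\boldsymbol x_F)\mathcal P^{\ell-1}(F)$, $\mathcal R^\ell(T)=\mathrm{curl}\,\boldsymbol{\mathcal P}^{\ell+1}(T)$, $\mathcal R^{c,\ell}(T)=(\boldsymbol x-\boldsymbol x_T)\mathcal P^{\ell-1}(T)$, $\mathcal G^\ell(T)=\nabla\mathcal P^{\ell+1}(T)$, $\mathcal G^{c,\ell}(T)=(\boldsymbol x-\boldsymbol x_T)\times\boldsymbol{\mathcal P}^{\ell-1}(T)$. $\pi^\ell_{\mathsf P}$, $\pi^\ell_{\mathcal R,\mathsf P}$, $\pi^{c,\ell}_{\mathcal R,\mathsf P}$, $\pi^\ell_{\mathcal G,T}$, $\pi^{c,\ell}_{\mathcal G,T}$ are the $L^2$-orthogonal projectors onto $\mathcal P^\ell(\mathsf P)$, $\mathcal R^\ell(\mathsf P)$, $\mathcal R^{c,\ell}(\mathsf P)$, $\mathcal G^\ell(T)$, $\mathcal G^{c,\ell}(T)$. Serendipity DDR spaces. Fix $k\ge0$; for each $\mathsf P\in\mathcal T_h\cup\mathcal F_h$ an integer $\eta_{\mathsf P}\ge2$ (number of selected, non-aligned boundary faces/edges)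 and $\ell_{\mathsf P}=k+1-\eta_{\mathsf P}$. $\underline X^k_{\mathrm{grad},h}$: vectors $\underline q_h=((q_T)_T,(q_F)_F,(q_E)_E,(q_V)_V)$ with $q_T\in\mathcal P^{\ell_T}(T)$, $q_F\in\mathcal P^{\ell_F}(F)$, $q_E\in\mathcal P^{k-1}(E)$, $q_V\in\mathbb R$. $\underline X^k_{\mathrm{curl},h}$: $\underline{\boldsymbol v}_h=((\boldsymbol v_{\mathcal R,T},\boldsymbol v^c_{\mathcal R,T})_T,(\boldsymbol v_{\mathcal R,F},\boldsymbol v^c_{\mathcal R,F})_F,(v_E)_E)$ with $\boldsymbol v_{\mathcal R,T}\in\mathcal R^{k-1}(T)$, $\boldsymbol v^c_{\mathcal R,T}\in\mathcal R^{c,\ell_T+1}(T)$, $\boldsymbol v_{\mathcal R,F}\in\mathcal R^{k-1}(F)$, $\boldsymbol v^c_{\mathcal R,F}\in\mathcal R^{c,\ell_F+1}(F)$, $v_E\in\mathcal P^k(E)$. $\underline X^k_{\mathrm{div},h}$: $\underline{\boldsymbol w}_h=((\boldsymbol w_{\mathcal G,T},\boldsymbol w^c_{\mathcal G,T})_T,(w_F)_F)$ with $\boldsymbol w_{\mathcal G,T}\in\mathcal G^{k-1}(T)$, $\boldsymbol w^c_{\mathcal G,T}\in\mathcal G^{c,k}(T)$, $w_F\in\mathcal P^k(F)$. A subscript $\mathsf P$ (e.g. $\underline q_T,\underline{\boldsymbol v}_F$) denotes the restriction to the components on $\mathsf P$ and its boundary entities. For $\mathsf P\in\mathcal T_h\cup\mathcal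 F_h$, $\boldsymbol{\mathfrak S}_{G,\mathsf P}:\underline X^k_{\mathrm{grad},\mathsf P}\to\boldsymbol{\mathcal P}^k(\mathsf P)$ and $\boldsymbol{\mathfrak S}_{C,\mathsf P}:\underline X^k_{\mathrm{curl},\mathsf P}\to\boldsymbol{\mathcal P}^k(\mathsf P)$ are the (linear) serendipity gradient and curl reconstruction operators of Di Pietro–Droniou's serendipity DDR complex. Operators. Edge: $G^k_E\underline q_E\in\mathcal P^k(E)$ with $\int_E G^k_E\underline q_E\,r=-\int_E q_Er'+\sum_{V\in\mathcal V_E}\omega_{EV}q_Vr(\boldsymbol x_V)$ for all $r\in\mathcal P^k(E)$; $\gamma^{k+1}_E\underline q_E\in\mathcal P^{k+1}(E)$ with $\gamma^{k+1}_E\underline q_E(\boldsymbol x_V)=q_V$ and $\pi^{k-1}_E\gamma^{k+1}_E\underline q_E=q_E$. Face: $\boldsymbol G^k_F\underline q_F\in\boldsymbol{\mathcal P}^k(F)$ with $\int_F\boldsymbol G^k_F\underline q_F\cdot(\boldsymbol w+\boldsymbol\tau)=\sum_{E\in\mathcal E_F}\omega_{FE}\int_E\gamma^{k+1}_E\underline q_E(\boldsymbol w\cdot\boldsymbol n_{FE})+\int_F\boldsymbol{\mathfrak S}_{G,F}\underline q_F\cdot\boldsymbol\tau$ for all $(\boldsymbol w,\boldsymbol\tau)\in\mathcal R^k(F)\times\mathcal R^{c,k}(F)$; $\gamma^{k+1}_F\underline q_F\in\mathcal P^{k+1}(F)$ with $\int_F\gamma^{k+1}_F\underline q_F\,\mathrm{div}_F\boldsymbol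 w=-\int_F\boldsymbol G^k_F\underline q_F\cdot\boldsymbol w+\sum_{E\in\mathcal E_F}\omega_{FE}\int_E\gamma^{k+1}_E\underline q_E(\boldsymbol w\cdot\boldsymbol n_{FE})$ for all $\boldsymbol w\in\mathcal R^{c,k+2}(F)$. Element: $\boldsymbol G^k_T\underline q_T\in\boldsymbol{\mathcal P}^k(T)$ with $\int_T\boldsymbol G^k_T\underline q_T\cdot(\boldsymbol w+\boldsymbol\tau)=\sum_{F\in\mathcal F_T}\omega_{TF}\int_F\gamma^{k+1}_F\underline q_F(\boldsymbol w\cdot\boldsymbol n_F)+\int_T\boldsymbol{\mathfrak S}_{G,T}\underline q_T\cdot\boldsymbol\tau$ for all $(\boldsymbol w,\boldsymbol\tau)\in\mathcal R^k(T)\times\mathcal R^{c,k}(T)$; $P_{\mathrm{grad},T}\underline q_T\in\mathcal P^{k+1}(T)$ with $\int_TP_{\mathrm{grad},T}\underline q_T\,\mathrm{div}\boldsymbol w=-\int_T\boldsymbol G^k_T\underline q_T\cdot\boldsymbol w+\sum_{F\in\mathcal F_T}\omega_{TF}\int_F\gamma^{k+1}_F\underline q_F(\boldsymbol w\cdot\boldsymbol n_F)$ for all $\boldsymbol w\in\mathcal R^{c,k+2}(T)$. Face curl: $C^k_F\underline{\boldsymbol v}_F\in\mathcal P^k(F)$ with $\int_FC^k_F\underline{\boldsymbol v}_F\,r=\int_F\boldsymbol v_{\mathcal R,F}\cdot\mathrm{\mathbf{rot}}_Fr-\sum_{E\in\mathcal E_F}\omega_{FE}\int_Ev_Er$ for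 all $r\in\mathcal P^k(F)$; $\boldsymbol\gamma^k_{t,F}\underline{\boldsymbol v}_F\in\boldsymbol{\mathcal P}^k(F)$ with $\int_F\boldsymbol\gamma^k_{t,F}\underline{\boldsymbol v}_F\cdot(\mathrm{\mathbf{rot}}_Fr+\boldsymbol\tau)=\int_FC^k_F\underline{\boldsymbol v}_F\,r+\sum_{E\in\mathcal E_F}\omega_{FE}\int_Ev_Er+\int_F\boldsymbol{\mathfrak S}_{C,F}\underline{\boldsymbol v}_F\cdot\boldsymbol\tau$ for all $(r,\boldsymbol\tau)\in\mathcal P^{0,k+1}(F)\times\mathcal R^{c,k}(F)$. Element curl: $\boldsymbol C^k_T\underline{\boldsymbol v}_T\in\boldsymbol{\mathcal P}^k(T)$ with $\int_T\boldsymbol C^k_T\underline{\boldsymbol v}_T\cdot\boldsymbol w=\int_T\boldsymbol v_{\mathcal R,T}\cdot\mathrm{curl}\,\boldsymbol w+\sum_{F\in\mathcal F_T}\omega_{TF}\int_F\boldsymbol\gamma^k_{t,F}\underline{\boldsymbol v}_F\cdot(\boldsymbol w\times\boldsymbol n_F)$ for all $\boldsymbol w\in\boldsymbol{\mathcal P}^k(T)$; $\boldsymbol P_{\mathrm{curl},T}\underline{\boldsymbol v}_T\in\boldsymbol{\mathcal P}^k(T)$ with $\int_T\boldsymbol P_{\mathrm{curl},T}\underline{\boldsymbol v}_T\cdot(\mathrm{curl}\,\boldsymbol w+\boldsymbol\tau)=\int_T\boldsymbol C^k_T\underline{\boldsymbol v}_T\cdot\boldsymbol w-\sum_{F\in\mathcal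 F_T}\omega_{TF}\int_F\boldsymbol\gamma^k_{t,F}\underline{\boldsymbol v}_F\cdot(\boldsymbol w\times\boldsymbol n_F)+\int_T\boldsymbol{\mathfrak S}_{C,T}\underline{\boldsymbol v}_T\cdot\boldsymbol\tau$ for all $(\boldsymbol w,\boldsymbol\tau)\in\mathcal G^{c,k+1}(T)\times\mathcal R^{c,k}(T)$. Divergence: $D^k_T\underline{\boldsymbol w}_T\in\mathcal P^k(T)$ with $\int_TD^k_T\underline{\boldsymbol w}_T\,q=-\int_T\boldsymbol w_{\mathcal G,T}\cdot\nabla q+\sum_{F\in\mathcal F_T}\omega_{TF}\int_Fw_Fq$ for all $q\in\mathcal P^k(T)$; $\boldsymbol P_{\mathrm{div},T}\underline{\boldsymbol w}_T\in\boldsymbol{\mathcal P}^k(T)$ with $\int_T\boldsymbol P_{\mathrm{div},T}\underline{\boldsymbol w}_T\cdot(\nabla r+\boldsymbol\tau)=-\int_TD^k_T\underline{\boldsymbol w}_T\,r+\sum_{F\in\mathcal F_T}\omega_{TF}\int_Fw_Fr+\int_T\boldsymbol w^c_{\mathcal G,T}\cdot\boldsymbol\tau$ for all $(r,\boldsymbol\tau)\in\mathcal P^{0,k+1}(T)\times\mathcal G^{c,k}(T)$. Global operators: $\underline G^k_h\underline q_h=((\pi^{k-1}_{\mathcal R,T}\boldsymbol G^k_T\underline q_T,\pi^{c,\ell_T+1}_{\mathcal R,T}\boldsymbol G^k_T\underline q_T)_T,(\pi^{k-1}_{\mathcal R,F}\boldsymbol G^k_F\underline q_F,\pi^{c,\ell_F+1}_{\mathcal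 R,F}\boldsymbol G^k_F\underline q_F)_F,(G^k_E\underline q_E)_E)\in\underline X^k_{\mathrm{curl},h}$ and $\underline C^k_h\underline{\boldsymbol v}_h=((\pi^{k-1}_{\mathcal G,T}\boldsymbol C^k_T\underline{\boldsymbol v}_T,\pi^{c,k}_{\mathcal G,T}\boldsymbol C^k_T\underline{\boldsymbol v}_T)_T,(C^k_F\underline{\boldsymbol v}_F)_F)\in\underline X^k_{\mathrm{div},h}$. $P_{\mathrm{grad},h}$, $\boldsymbol P_{\mathrm{curl},h}$, $\boldsymbol P_{\mathrm{div},h}$, $\boldsymbol C^k_h$ are the piecewise polynomial functions on $U$ equal on each $T$ to $P_{\mathrm{grad},T}$, $\boldsymbol P_{\mathrm{curl},T}$, $\boldsymbol P_{\mathrm{div},T}$, $\boldsymbol C^k_T$ applied to the restriction to $T$. Discrete inner products. $(\underline{\boldsymbol w}_h,\underline{\boldsymbol v}_h)_{\mathrm{curl},h}=\sum_T[\int_T\boldsymbol P_{\mathrm{curl},T}\underline{\boldsymbol w}_T\cdot\boldsymbol P_{\mathrm{curl},T}\underline{\boldsymbol v}_T+s_{\mathrm{curl},T}(\underline{\boldsymbol w}_T,\underline{\boldsymbol v}_T)]$ with $s_{\mathrm{curl},T}(\underline{\boldsymbol w}_T,\underline{\boldsymbol v}_T)=\sum_{F\in\mathcal F_T}h_F\int_F((\boldsymbol P_{\mathrm{curl},T}\underline{\boldsymbol w}_T)_{t,F}-\boldsymbol\gamma^k_{t,F}\underline{\boldsymbol w}_F)\cdot((\boldsymbol P_{\mathrm{curl},T}\underline{\boldsymbol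 v}_T)_{t,F}-\boldsymbol\gamma^k_{t,F}\underline{\boldsymbol v}_F)+\sum_{E\in\mathcal E_T}h_E^2\int_E(\boldsymbol P_{\mathrm{curl},T}\underline{\boldsymbol w}_T\cdot\boldsymbol t_E-w_E)(\boldsymbol P_{\mathrm{curl},T}\underline{\boldsymbol v}_T\cdot\boldsymbol t_E-v_E)$, where $\boldsymbol z_{t,F}=\boldsymbol n_F\times(\boldsymbol z\times\boldsymbol n_F)$ and $h_F,h_E$ are diameters. $(\underline{\boldsymbol w}_h,\underline{\boldsymbol v}_h)_{\mathrm{div},h}=\sum_T[\int_T\boldsymbol P_{\mathrm{div},T}\underline{\boldsymbol w}_T\cdot\boldsymbol P_{\mathrm{div},T}\underline{\boldsymbol v}_T+s_{\mathrm{div},T}(\underline{\boldsymbol w}_T,\underline{\boldsymbol v}_T)]$ with $s_{\mathrm{div},T}(\underline{\boldsymbol w}_T,\underline{\boldsymbol v}_T)=\sum_{F\in\mathcal F_T}h_F\int_F(\boldsymbol P_{\mathrm{div},T}\underline{\boldsymbol w}_T\cdot\boldsymbol n_F-w_F)(\boldsymbol P_{\mathrm{div},T}\underline{\boldsymbol v}_T\cdot\boldsymbol n_F-v_F)$. Lie algebra tensorisation. $\mathfrak g$ is a finite-dimensional real Lie algebra with basis $(e_I)_{I=1}^d$, bracket $[\cdot,\cdot]$ and an ad-invariant inner product $\langle\cdot,\cdot\rangle$ (i.e. $\langle[x,y],z\rangle=-\langle y,[x,z]\rangle$); summation over repeated indices is implied. For a space $X$, $X\otimes\mathfrak g$ consists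 of $v=v^I\otimes e_I$, $v^I\in X$; the spaces $\underline X^{k,\mathfrak g}_{\bullet,h}=\underline X^k_{\bullet,h}\otimes\mathfrak g$ and all operators above act componentwise ($L(v)=L(v^I)\otimes e_I$), keeping the same symbols. $(\underline x_h,\underline y_h)_{\bullet,\mathfrak g,h}=(\underline x_h^I,\underline y_h^J)_{\bullet,h}\langle e_I,e_J\rangle$. For $\mathfrak g$-valued fields, pointwise $\langle\boldsymbol v,\boldsymbol w\rangle=(\boldsymbol v^I\cdot\boldsymbol w^J)\langle e_I,e_J\rangle$, $[\boldsymbol v,q]=\boldsymbol v^Iq^J\otimes[e_I,e_J]$ for scalar $q$, and $[\![\boldsymbol v,\boldsymbol w]\!]=(\boldsymbol v^I\times\boldsymbol w^J)\otimes[e_I,e_J]$. Discrete bracket $[\![\cdot,\cdot]\!]_h:(\underline X^{k,\mathfrak g}_{\mathrm{curl},h})^2\to\underline X^{k,\mathfrak g}_{\mathrm{div},h}$: face components $\pi^k_F([\![\boldsymbol\gamma^k_{t,F}\underline{\boldsymbol v}_F,\boldsymbol\gamma^k_{t,F}\underline{\boldsymbol w}_F]\!]\cdot\boldsymbol n_F)$, element components $\pi^{k-1}_{\mathcal G,T}[\![\boldsymbol P_{\mathrm{curl},T}\underline{\boldsymbol v}_T,\boldsymbol P_{\mathrm{curl},T}\underline{\boldsymbol w}_T]\!]$ and $\pi^{c,k}_{\mathcal G,T}[\![\boldsymbol P_{\mathrm{curl},T}\underline{\boldsymbol v}_T,\boldsymbol P_{\mathrm{curl},T}\underline{\boldsymbol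 w}_T]\!]$. Scheme (S). With $\delta t^{n+\frac12}=t^{n+1}-t^n$, $\delta_t^{n+1}v=(v^{n+1}-v^n)/\delta t^{n+\frac12}$ and $\underline{\boldsymbol A}_h^{n+\frac12}=\frac12(\underline{\boldsymbol A}_h^n+\underline{\boldsymbol A}_h^{n+1})$: for all $n$, (i) $\delta_t^{n+1}\underline{\boldsymbol A}_h=-\underline{\boldsymbol E}_h^{n+1}$; (ii) for all $\underline{\boldsymbol v}_h\in\underline X^{k,\mathfrak g}_{\mathrm{curl},h}$: $(\delta_t^{n+1}\underline{\boldsymbol E}_h,\underline{\boldsymbol v}_h)_{\mathrm{curl},\mathfrak g,h}+(\underline G^k_h\underline\lambda_h^{n+1},\underline{\boldsymbol v}_h)_{\mathrm{curl},\mathfrak g,h}+\int_U\langle[\boldsymbol P_{\mathrm{curl},h}\underline{\boldsymbol A}_h^{n+1},P_{\mathrm{grad},h}\underline\lambda_h^{n+1}],\boldsymbol P_{\mathrm{curl},h}\underline{\boldsymbol v}_h\rangle=(\underline C^k_h\underline{\boldsymbol A}_h^{n+1},\underline C^k_h\underline{\boldsymbol v}_h)_{\mathrm{div},\mathfrak g,h}+\mathfrak N(\underline{\boldsymbol A}_h^n,\underline{\boldsymbol A}_h^{n+1};\underline{\boldsymbol v}_h)$; (iii) for all $\underline q_h\in\underline X^{k,\mathfrak g}_{\mathrm{grad},h}$: $(\delta_t^{n+1}\underline{\boldsymbol E}_h,\underline G^k_h\underline q_h)_{\mathrm{curl},\mathfrak g,h}+\int_U\langle\boldsymbol P_{\mathrm{curl},h}(\delta_t^{n+1}\underline{\boldsymbol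 E}_h),[\boldsymbol P_{\mathrm{curl},h}\underline{\boldsymbol A}_h^n,P_{\mathrm{grad},h}\underline q_h]\rangle=0$. Here $\mathfrak N_1(\underline{\boldsymbol A}^n_h,\underline{\boldsymbol A}^{n+1}_h;\underline{\boldsymbol v}_h)=(\underline C^k_h\underline{\boldsymbol A}_h^{n+1},[\![\underline{\boldsymbol A}_h^{n+\frac12},\underline{\boldsymbol v}_h]\!]_h)_{\mathrm{div},\mathfrak g,h}+(\frac12[\![\underline{\boldsymbol A}_h^{n+1},\underline{\boldsymbol A}_h^{n+1}]\!]_h,\underline C^k_h\underline{\boldsymbol v}_h+[\![\underline{\boldsymbol A}_h^{n+\frac12},\underline{\boldsymbol v}_h]\!]_h)_{\mathrm{div},\mathfrak g,h}$ and $\mathfrak N_2(\underline{\boldsymbol A}^n_h,\underline{\boldsymbol A}^{n+1}_h;\underline{\boldsymbol v}_h)=\int_U\langle\boldsymbol C^k_h\underline{\boldsymbol A}_h^{n+1},[\![\boldsymbol P_{\mathrm{curl},h}\underline{\boldsymbol A}_h^{n+\frac12},\boldsymbol P_{\mathrm{curl},h}\underline{\boldsymbol v}_h]\!]\rangle+\int_U\langle\frac12[\![\boldsymbol P_{\mathrm{curl},h}\underline{\boldsymbol A}_h^{n+1},\boldsymbol P_{\mathrm{curl},h}\underline{\boldsymbol A}_h^{n+1}]\!],\boldsymbol C^k_h\underline{\boldsymbol v}_h+[\![\boldsymbol P_{\mathrm{curl},h}\underline{\boldsymbol A}_h^{n+\frac12},\boldsymbol P_{\mathrm{curl},h}\underline{\boldsymbol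 v}_h]\!]\rangle$. *)

theory Defs
  imports "HOL-Analysis.Analysis"
begin

type_synonym pt = "real^3"

text \<open>The Lie algebra g is a type of class euclidean_space (finite-dimensional real
inner product space); its inner product is the ad-invariant inner product and br is the bracket.\<close>

definition lie_algebra :: "('g::euclidean_space \<Rightarrow> 'g \<Rightarrow> 'g) \<Rightarrow> bool" where
  "lie_algebra br \<longleftrightarrow> bilinear br \<and> (\<forall>x. br x x = 0) \<and>
     (\<forall>x y z. br x (br y z) + br y (br z x) + br z (br x y) = 0)"

definition ad_invariant :: "('g::euclidean_space \<Rightarrow> 'g \<Rightarrow> 'g) \<Rightarrow> bool" where
  "ad_invariant br \<longleftrightarrow> (\<forall>x y z. inner (br x y) z = - inner y (br x z))"

text \<open>An element v = v^I \<otimes> e_I of X \<otimes> g is represented by the linear map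
y \<mapsto> \<Sum>_I \<langle>e_I,y\<rangle> v^I from g to X; for the orthonormal basis (Basis) of g one has v^I = v e_I.\<close>

definition tensor :: "('g::euclidean_space \<Rightarrow> 'x::real_vector) set" where
  "tensor = {v. linear v}"

definition tip :: "('x \<Rightarrow> 'x \<Rightarrow> real) \<Rightarrow> ('g::euclidean_space \<Rightarrow> 'x) \<Rightarrow> ('g \<Rightarrow> 'x) \<Rightarrow> real" where
  "tip ip v w = (\<Sum>b\<in>Basis. \<Sum>c\<in>Basis. ip (v b) (w c) * inner b c)"

definition fip :: "('g::euclidean_space \<Rightarrow> pt \<Rightarrow> real^3) \<Rightarrow> ('g \<Rightarrow> pt \<Rightarrow> real^3) \<Rightarrow> pt \<Rightarrow> real" where
  "fip V W x = (\<Sum>b\<in>Basis. \<Sum>c\<in>Basis. inner (V b x) (W c x) * inner b c)"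

text \<open>[V,Q] = V^I Q^J \<otimes> [e_I,e_J] for a g-valued vector field V and scalar field Q\<close>
definition lb_vs :: "('g::euclidean_space \<Rightarrow> 'g \<Rightarrow> 'g) \<Rightarrow> ('g \<Rightarrow> pt \<Rightarrow> real^3) \<Rightarrow> ('g \<Rightarrow> pt \<Rightarrow> real)
    \<Rightarrow> ('g \<Rightarrow> pt \<Rightarrow> real^3)" where
  "lb_vs br V Q = (\<lambda>y x. \<Sum>b\<in>Basis. \<Sum>c\<in>Basis. (inner (br b c) y * Q c x) *\<^sub>R V b x)"

text \<open>[[V,W]] = (V^I \<times> W^J) \<otimes> [e_I,e_J]\<close>
definition lb_vv :: "('g::euclidean_space \<Rightarrow> 'g \<Rightarrow> 'g) \<Rightarrow> ('g \<Rightarrow> pt \<Rightarrow> real^3) \<Rightarrow> ('g \<Rightarrow> pt \<Rightarrow> real^3)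
    \<Rightarrow> ('g \<Rightarrow> pt \<Rightarrow> real^3)" where
  "lb_vv br V W = (\<lambda>y x. \<Sum>b\<in>Basis. \<Sum>c\<in>Basis. inner (br b c) y *\<^sub>R cross3 (V b x) (W c x))"

text \<open>discrete bracket [[v,w]]_h = bh(v^I,w^J) \<otimes> [e_I,e_J], where bh is the scalar
discrete cross product X_curl \<times> X_curl \<rightarrow> X_div of the paper (faces: \<pi>_F((\<gamma> v \<times> \<gamma> w)\<cdot>n_F),
elements: projections of P_curl v \<times> P_curl w).\<close>
definition dbr :: "('g::euclidean_space \<Rightarrow> 'g \<Rightarrow> 'g) \<Rightarrow> ('xc \<Rightarrow> 'xc \<Rightarrow> 'xd::real_vector)
    \<Rightarrow> ('g \<Rightarrow> 'xc) \<Rightarrow> ('g \<Rightarrow> 'xc) \<Rightarrow> ('g \<Rightarrow> 'xd)" where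
  "dbr br bh v w = (\<lambda>y. \<Sum>b\<in>Basis. \<Sum>c\<in>Basis. inner (br b c) y *\<^sub>R bh (v b) (w c))"

definition intU :: "pt set \<Rightarrow> (pt \<Rightarrow> real) \<Rightarrow> real" where
  "intU U f = (LINT x:U|lborel. f x)"

definition halfavg :: "('g \<Rightarrow> 'x::real_vector) \<Rightarrow> ('g \<Rightarrow> 'x) \<Rightarrow> ('g \<Rightarrow> 'x)" where
  "halfavg a b = (\<lambda>y. (1/2) *\<^sub>R (a y + b y))"

text \<open>The (scalar) serendipity DDR spaces X_grad,h, X_curl,h, X_div,h are the types
'xg, 'xc, 'xd; Gh, Ch are the global discrete gradient and curl; Pg, Pc are the global
potentials P_grad,h, P_curl,h (piecewise polynomial fields on U); Cpw is the piecewise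
curl C^k_h; ipc, ipd are the discrete L2 inner products; bh the scalar discrete cross product.\<close>

definition ddr_data :: "pt set \<Rightarrow> ('xg::real_vector \<Rightarrow> 'xc::real_vector) \<Rightarrow> ('xc \<Rightarrow> 'xd::real_vector)
   \<Rightarrow> ('xg \<Rightarrow> pt \<Rightarrow> real) \<Rightarrow> ('xc \<Rightarrow> pt \<Rightarrow> real^3) \<Rightarrow> ('xc \<Rightarrow> pt \<Rightarrow> real^3)
   \<Rightarrow> ('xc \<Rightarrow> 'xc \<Rightarrow> real) \<Rightarrow> ('xd \<Rightarrow> 'xd \<Rightarrow> real) \<Rightarrow> ('xc \<Rightarrow> 'xc \<Rightarrow> 'xd) \<Rightarrow> bool" where
  "ddr_data U Gh Ch Pg Pc Cpw ipc ipd bh \<longleftrightarrow>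
     bounded U \<and> U \<in> sets lborel \<and>
     linear Gh \<and> linear Ch \<and>
     (\<forall>x. linear (\<lambda>q. Pg q x)) \<and> (\<forall>x. linear (\<lambda>v. Pc v x)) \<and> (\<forall>x. linear (\<lambda>v. Cpw v x)) \<and>
     (\<forall>q. Pg q \<in> borel_measurable lborel \<and> bounded (Pg q ` U)) \<and>
     (\<forall>v. Pc v \<in> borel_measurable lborel \<and> bounded (Pc v ` U)) \<and>
     (\<forall>v. Cpw v \<in> borel_measurable lborel \<and> bounded (Cpw v ` U)) \<and>
     bilinear ipc \<and> bilinear ipd \<and> bilinear bh \<and>
     (\<forall>v w. ipc v w = ipc w v) \<and> (\<forall>v. v \<noteq> 0 \<longrightarrow> ipc v v > 0) \<and>
     (\<forall>v w. ipd v w = ipd w v) \<and> (\<forall>v. v \<noteq> 0 \<longrightarrow> ipd v v > 0)"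

definition NL1 where
  "NL1 br Ch ipd bh A0 A1 v =
     tip ipd (Ch \<circ> A1) (dbr br bh (halfavg A0 A1) v)
   + tip ipd (\<lambda>y. (1/2) *\<^sub>R dbr br bh A1 A1 y)
             (\<lambda>y. Ch (v y) + dbr br bh (halfavg A0 A1) v y)"

definition NL2 where
  "NL2 br U Pc Cpw A0 A1 v =
     intU U (fip (Cpw \<circ> A1) (lb_vv br (Pc \<circ> halfavg A0 A1) (Pc \<circ> v)))
   + intU U (fip (\<lambda>y x. (1/2) *\<^sub>R lb_vv br (Pc \<circ> A1) (Pc \<circ> A1) y x)
                 (\<lambda>y x. Cpw (v y) x + lb_vv br (Pc \<circ> halfavg A0 A1) (Pc \<circ> v) y x))"

definition scheme_step where
  "scheme_step br U Gh Ch Pg Pc ipc ipd NL t A E lam n \<longleftrightarrow>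
    (let dt = t (Suc n) - t n;
         dE = (\<lambda>y. (1/dt) *\<^sub>R (E (Suc n) y - E n y)) in
      (\<lambda>y. (1/dt) *\<^sub>R (A (Suc n) y - A n y)) = (\<lambda>y. - E (Suc n) y)
    \<and> (\<forall>v\<in>tensor.
         tip ipc dE v + tip ipc (Gh \<circ> lam (Suc n)) v
         + intU U (fip (lb_vs br (Pc \<circ> A (Suc n)) (Pg \<circ> lam (Suc n))) (Pc \<circ> v))
         = tip ipd (Ch \<circ> A (Suc n)) (Ch \<circ> v) + NL (A n) (A (Suc n)) v)
    \<and> (\<forall>q\<in>tensor.
         tip ipc dE (Gh \<circ> q) + intU U (fip (Pc \<circ> dE) (lb_vs br (Pc \<circ> A n) (Pg \<circ> q))) = 0))"

definition constraintC where
  "constraintC br U Gh Pg Pc ipc A E n q =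
     tip ipc (E n) (Gh \<circ> q) + intU U (fip (Pc \<circ> E n) (lb_vs br (Pc \<circ> A n) (Pg \<circ> q)))"

end

theory Submission
  imports Defs
begin

definition goodU :: "pt set \<Rightarrow> (pt \<Rightarrow> 'a::{real_normed_vector,second_countable_topology}) \<Rightarrow> bool" where
  "goodU U f \<longleftrightarrow> f \<in> borel_measurable lborel \<and> (\<exists>B. \<forall>x\<in>U. norm (f x) \<le> B)"

lemma good_const: "goodU U (\<lambda>x. c)"
  unfolding goodU_def by auto

lemma good_add:
  fixes f g :: "pt \<Rightarrow> 'a::{real_normed_vector,second_countable_topology}"
  assumes "goodU U f" "goodU U g" shows "goodU U (\<lambda>x. f x + g x)"
proof -
  obtain B1 B2 where b: "\<forall>x\<in>U. norm (f x) \<le> B1" "\<forall>x\<in>U. norm (g x) \<le> B2"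
    using assms unfolding goodU_def by blast
  have "\<forall>x\<in>U. norm (f x + g x) \<le> B1 + B2"
    using b by (meson add_mono norm_triangle_le)
  moreover have "(\<lambda>x. f x + g x) \<in> borel_measurable lborel"
    using assms unfolding goodU_def by (auto intro!: borel_measurable_add borel_measurable_scaleR borel_measurable_inner)
  ultimately show ?thesis unfolding goodU_def by blast
qed

lemma good_sum:
  fixes f :: "'i \<Rightarrow> pt \<Rightarrow> 'a::{real_normed_vector,second_countable_topology}"
  assumes "finite S" "\<And>i. i \<in> S \<Longrightarrow> goodU U (f i)" shows "goodU U (\<lambda>x. \<Sum>i\<in>S. f i x)"
  using assms
proof (induction S rule: finite_induct)
  case empty then show ?case by (simp add: good_const)
next
  case (insert a S) then show ?case by (simp add: good_add)
qed

lemma good_scaleR: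
  fixes f :: "pt \<Rightarrow> real" and g :: "pt \<Rightarrow> 'a::{real_normed_vector,second_countable_topology}"
  assumes "goodU U f" "goodU U g" shows "goodU U (\<lambda>x. f x *\<^sub>R g x)"
proof -
  obtain B1 B2 where b: "\<forall>x\<in>U. norm (f x) \<le> B1" "\<forall>x\<in>U. norm (g x) \<le> B2"
    using assms unfolding goodU_def by blast
  have "\<forall>x\<in>U. norm (f x *\<^sub>R g x) \<le> B1 * B2"
  proof
    fix x assume "x \<in> U"
    then have "norm (f x) \<le> B1" "norm (g x) \<le> B2" using b by auto
    then have "norm (f x) * norm (g x) \<le> B1 * B2"
      by (meson mult_mono norm_ge_zero order_trans)
    then show "norm (f x *\<^sub>R g x) \<le> B1 * B2" by simp
  qed
  moreover have "(\<lambda>x. f x *\<^sub>R g x) \<in> borel_measurable lborel"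
    using assms unfolding goodU_def by (auto intro!: borel_measurable_add borel_measurable_scaleR borel_measurable_inner)
  ultimately show ?thesis unfolding goodU_def by blast
qed

lemma good_mult:
  fixes f g :: "pt \<Rightarrow> real"
  assumes "goodU U f" "goodU U g" shows "goodU U (\<lambda>x. f x * g x)"
  using good_scaleR[OF assms] by simp

lemma good_inner:
  fixes f g :: "pt \<Rightarrow> real^3"
  assumes "goodU U f" "goodU U g" shows "goodU U (\<lambda>x. inner (f x) (g x))"
proof -
  obtain B1 B2 where b: "\<forall>x\<in>U. norm (f x) \<le> B1" "\<forall>x\<in>U. norm (g x) \<le> B2"
    using assms unfolding goodU_def by blast
  have "\<forall>x\<in>U. norm (inner (f x) (g x)) \<le> B1 * B2"
  proof
    fix x assume "x \<in> U"
    then have "norm (f x) \<le> B1" "norm (g x) \<le> B2" using b by auto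
    then have "norm (f x) * norm (g x) \<le> B1 * B2"
      by (meson mult_mono norm_ge_zero order_trans)
    then show "norm (inner (f x) (g x)) \<le> B1 * B2"
      using Cauchy_Schwarz_ineq2[of "f x" "g x"] by simp
  qed
  moreover have "(\<lambda>x. inner (f x) (g x)) \<in> borel_measurable lborel"
    using assms unfolding goodU_def by (auto intro!: borel_measurable_add borel_measurable_scaleR borel_measurable_inner)
  ultimately show ?thesis unfolding goodU_def by blast
qed

lemma good_integrable:
  fixes f :: "pt \<Rightarrow> real"
  assumes "goodU U f" "bounded U" "U \<in> sets lborel"
  shows "set_integrable lborel U f"
proof -
  obtain B where b: "\<forall>x\<in>U. norm (f x) \<le> B" and m: "f \<in> borel_measurable lborel"
    using assms unfolding goodU_def by blast
  show ?thesis unfolding set_integrable_def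
    by (rule integrableI_bounded_set_indicator[where B=B])
       (use assms b m emeasure_bounded_finite in auto)
qed

lemma fip_integrable:
  fixes br :: "'g::euclidean_space \<Rightarrow> 'g \<Rightarrow> 'g"
  assumes "bounded U" "U \<in> sets lborel"
    and "\<And>v. goodU U (Pc v)" and "\<And>q. goodU U (Pg q)"
  shows "set_integrable lborel U (fip (Pc \<circ> X) (lb_vs br (Pc \<circ> Y) (Pg \<circ> q)))"
proof -
  have "goodU U (fip (Pc \<circ> X) (lb_vs br (Pc \<circ> Y) (Pg \<circ> q)))"
    unfolding fip_def lb_vs_def o_def
    by (intro good_sum finite_Basis good_mult good_inner good_const good_scaleR assms)
  then show ?thesis using good_integrable assms by blast
qed

lemma br_antisym:
  assumes "lie_algebra br" shows "br x y = - br y x"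
proof -
  have bl: "bilinear br" and z: "\<And>x. br x x = 0" using assms unfolding lie_algebra_def by auto
  have "0 = br (x + y) (x + y)" using z by simp
  also have "\<dots> = br x x + br x y + br y x + br y y"
    using bl by (simp add: bilinear_ladd bilinear_radd)
  finally show ?thesis using z by (simp add: eq_neg_iff_add_eq_0 add.commute)
qed

lemma coef_antisym:
  assumes "lie_algebra br" "ad_invariant br"
  shows "inner (br a c) b = - inner (br b c) a"
proof -
  have ad: "\<And>x y z. inner (br x y) z = - inner y (br x z)" using assms(2) unfolding ad_invariant_def by auto
  have "inner (br a c) b = - inner (br c a) b" using br_antisym[OF assms(1), of a c] by simp
  also have "\<dots> = inner a (br c b)" using ad by simp
  also have "\<dots> = inner (br c b) a" by (simp add: inner_commute)
  also have "\<dots> = - inner (br b c) a" using br_antisym[OF assms(1), of c b] by simp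
  finally show ?thesis .
qed

lemma sum_basis_delta:
  fixes f :: "'g::euclidean_space \<Rightarrow> real"
  assumes "b \<in> Basis" shows "(\<Sum>c\<in>Basis. f c * inner b c) = f b"
proof -
  have "(\<Sum>c\<in>Basis. f c * inner b c) = (\<Sum>c\<in>Basis. if b = c then f c else 0)"
    by (rule sum.cong) (auto simp: inner_Basis assms)
  also have "\<dots> = f b" using assms by simp
  finally show ?thesis .
qed

lemma fip_diag:
  "fip V W x = (\<Sum>b\<in>(Basis::'g::euclidean_space set). inner (V b x) (W b x))"
  unfolding fip_def by (rule sum.cong) (auto simp: sum_basis_delta[where f="\<lambda>c. inner (V _ x) (W c x)"])

lemma fip_self_zero:
  fixes br :: "'g::euclidean_space \<Rightarrow> 'g \<Rightarrow> 'g"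
  assumes "lie_algebra br" "ad_invariant br"
  shows "fip V (lb_vs br V Q) x = 0"
proof -
  define S where "S = (\<Sum>b\<in>(Basis::'g set). \<Sum>b'\<in>Basis. \<Sum>c\<in>Basis.
       inner (br b' c) b * Q c x * inner (V b x) (V b' x))"
  have e1: "fip V (lb_vs br V Q) x = S"
    unfolding fip_diag S_def lb_vs_def
    by (simp add: inner_sum_right mult.assoc mult.left_commute)
  have "S = (\<Sum>b'\<in>(Basis::'g set). \<Sum>b\<in>Basis. \<Sum>c\<in>Basis.
       inner (br b' c) b * Q c x * inner (V b x) (V b' x))"
    unfolding S_def by (rule sum.swap)
  also have "\<dots> = (\<Sum>b'\<in>(Basis::'g set). \<Sum>b\<in>Basis. \<Sum>c\<in>Basis.
       - (inner (br b c) b' * Q c x * inner (V b' x) (V b x)))"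
  proof -
    have h: "\<And>b b' c. inner (br b' c) b * Q c x * inner (V b x) (V b' x)
        = - (inner (br b c) b' * Q c x * inner (V b' x) (V b x))"
    proof -
      fix b b' c
      have "inner (br b' c) b = - inner (br b c) b'" by (rule coef_antisym[OF assms])
      moreover have "inner (V b x) (V b' x) = inner (V b' x) (V b x)" by (rule inner_commute)
      ultimately show "inner (br b' c) b * Q c x * inner (V b x) (V b' x)
        = - (inner (br b c) b' * Q c x * inner (V b' x) (V b x))" by simp
    qed
    show ?thesis by (intro sum.cong refl, rule h)
  qed
  also have "\<dots> = - S" unfolding S_def by (simp add: sum_negf)
  finally show ?thesis using e1 by simp
qed

lemma fip_add1: "fip (\<lambda>b x. V1 b x + V2 b x) W x = fip V1 W x + fip V2 W x"
  unfolding fip_def by (simp add: inner_add_left distrib_right sum.distrib)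
lemma fip_scale1: "fip (\<lambda>b x. c *\<^sub>R V b x) W x = c * fip V W x"
  unfolding fip_def by (simp add: sum_distrib_left mult.assoc)
lemma fip_add2: "fip V (\<lambda>b x. W1 b x + W2 b x) x = fip V W1 x + fip V W2 x"
  unfolding fip_def by (simp add: inner_add_right distrib_right sum.distrib)
lemma fip_scale2: "fip V (\<lambda>b x. c *\<^sub>R W b x) x = c * fip V W x"
  unfolding fip_def by (simp add: sum_distrib_left mult.assoc)
lemma lbvs_add: "lb_vs br (\<lambda>b x. V1 b x + V2 b x) Q = (\<lambda>y x. lb_vs br V1 Q y x + lb_vs br V2 Q y x)"
  unfolding lb_vs_def by (simp add: scaleR_add_right sum.distrib)
lemma lbvs_scale: "lb_vs br (\<lambda>b x. c *\<^sub>R V b x) Q = (\<lambda>y x. c *\<^sub>R lb_vs br V Q y x)"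
  unfolding lb_vs_def by (simp add: scaleR_sum_right mult_ac)

lemma tip_add1: "bilinear ip \<Longrightarrow> tip ip (\<lambda>b. v1 b + v2 b) w = tip ip v1 w + tip ip v2 w"
  unfolding tip_def by (simp add: bilinear_ladd distrib_right sum.distrib)
lemma tip_scale1: "bilinear ip \<Longrightarrow> tip ip (\<lambda>b. c *\<^sub>R v b) w = c * tip ip v w"
  unfolding tip_def by (simp add: bilinear_lmul sum_distrib_left mult.assoc)

lemma lin_comb: "linear f \<Longrightarrow> f (a + c *\<^sub>R b) = f a + c *\<^sub>R f b"
  by (simp add: linear_add linear_scale)

theorem mainTheorem1:
  fixes br :: "'g::euclidean_space \<Rightarrow> 'g \<Rightarrow> 'g"
    and U :: "pt set"
    and Gh :: "'xg::real_vector \<Rightarrow> 'xc::real_vector" and Ch :: "'xc \<Rightarrow> 'xd::real_vector"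
    and Pg :: "'xg \<Rightarrow> pt \<Rightarrow> real" and Pc Cpw :: "'xc \<Rightarrow> pt \<Rightarrow> real^3"
    and ipc :: "'xc \<Rightarrow> 'xc \<Rightarrow> real" and ipd :: "'xd \<Rightarrow> 'xd \<Rightarrow> real"
    and bh :: "'xc \<Rightarrow> 'xc \<Rightarrow> 'xd"
    and NL :: "('g \<Rightarrow> 'xc) \<Rightarrow> ('g \<Rightarrow> 'xc) \<Rightarrow> ('g \<Rightarrow> 'xc) \<Rightarrow> real"
    and t :: "nat \<Rightarrow> real" and N :: nat
    and A E :: "nat \<Rightarrow> 'g \<Rightarrow> 'xc" and lam :: "nat \<Rightarrow> 'g \<Rightarrow> 'xg"
  assumes "lie_algebra br" and "ad_invariant br"
    and "ddr_data U Gh Ch Pg Pc Cpw ipc ipd bh"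
    and "NL = NL1 br Ch ipd bh \<or> NL = NL2 br U Pc Cpw"
    and "t 0 = 0" and "\<forall>n<N. t n < t (Suc n)"
    and "\<forall>n\<le>N. A n \<in> tensor \<and> E n \<in> tensor \<and> lam n \<in> tensor"
    and "\<forall>n<N. scheme_step br U Gh Ch Pg Pc ipc ipd NL t A E lam n"
  shows "\<forall>q\<in>tensor. \<forall>n\<le>N. constraintC br U Gh Pg Pc ipc A E n q = constraintC br U Gh Pg Pc ipc A E 0 q"
proof -
  note dd = assms(3)[unfolded ddr_data_def]
  have bU: "bounded U" and sU: "U \<in> sets lborel" and bip: "bilinear ipc"
    and linPc: "\<And>x. linear (\<lambda>v. Pc v x)" using dd by auto
  have gPc: "\<And>v. goodU U (Pc v)" and gPg: "\<And>q. goodU U (Pg q)"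
    using dd unfolding goodU_def bounded_iff by auto
  have step: "constraintC br U Gh Pg Pc ipc A E (Suc n) q = constraintC br U Gh Pg Pc ipc A E n q"
    if nN: "n < N" and qT: "q \<in> tensor" for n q
  proof -
    define dt where "dt = t (Suc n) - t n"
    define dE where "dE = (\<lambda>y. (1/dt) *\<^sub>R (E (Suc n) y - E n y))"
    have dt0: "dt \<noteq> 0" using assms(6) nN unfolding dt_def by force
    have sch: "scheme_step br U Gh Ch Pg Pc ipc ipd NL t A E lam n" using assms(8) nN by auto
    have i: "(\<lambda>y. (1/dt) *\<^sub>R (A (Suc n) y - A n y)) = (\<lambda>y. - E (Suc n) y)"
      and iii: "tip ipc dE (Gh \<circ> q) + intU U (fip (Pc \<circ> dE) (lb_vs br (Pc \<circ> A n) (Pg \<circ> q))) = 0"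
      using sch qT unfolding scheme_step_def Let_def dt_def[symmetric] dE_def[symmetric] by blast+
    have A1: "A (Suc n) b = A n b + (- dt) *\<^sub>R E (Suc n) b" for b
    proof -
      have "(1/dt) *\<^sub>R (A (Suc n) b - A n b) = - E (Suc n) b" using fun_cong[OF i, of b] by simp
      then have "dt *\<^sub>R ((1/dt) *\<^sub>R (A (Suc n) b - A n b)) = dt *\<^sub>R (- E (Suc n) b)" by simp
      then have "A (Suc n) b - A n b = - (dt *\<^sub>R E (Suc n) b)" using dt0 by simp
      then show ?thesis by (simp add: algebra_simps)
    qed
    have E0: "E n b = E (Suc n) b + (- dt) *\<^sub>R dE b" for b
      unfolding dE_def using dt0 by (simp add: algebra_simps)
    have E1: "E (Suc n) = (\<lambda>b. E n b + dt *\<^sub>R dE b)"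
      unfolding dE_def using dt0 by (simp add: algebra_simps)
    have PA1: "Pc \<circ> A (Suc n) = (\<lambda>b x. (Pc \<circ> A n) b x + (- dt) *\<^sub>R (Pc \<circ> E (Suc n)) b x)"
    proof (intro ext)
      fix b x show "(Pc \<circ> A (Suc n)) b x = (Pc \<circ> A n) b x + (- dt) *\<^sub>R (Pc \<circ> E (Suc n)) b x"
        using lin_comb[OF linPc[of x], of "A n b" "-dt" "E (Suc n) b"] A1[of b] by simp
    qed
    have PE0: "Pc \<circ> E n = (\<lambda>b x. (Pc \<circ> E (Suc n)) b x + (- dt) *\<^sub>R (Pc \<circ> dE) b x)"
    proof (intro ext)
      fix b x show "(Pc \<circ> E n) b x = (Pc \<circ> E (Suc n)) b x + (- dt) *\<^sub>R (Pc \<circ> dE) b x"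
        using lin_comb[OF linPc[of x], of "E (Suc n) b" "-dt" "dE b"] E0[of b] by simp
    qed
    let ?Q = "Pg \<circ> q"
    define f0 where "f0 = fip (Pc \<circ> E n) (lb_vs br (Pc \<circ> A n) ?Q)"
    define g where "g = fip (Pc \<circ> dE) (lb_vs br (Pc \<circ> A n) ?Q)"
    have pw: "fip (Pc \<circ> E (Suc n)) (lb_vs br (Pc \<circ> A (Suc n)) ?Q) x = f0 x + dt * g x" for x
    proof -
      have "fip (Pc \<circ> E (Suc n)) (lb_vs br (Pc \<circ> A (Suc n)) ?Q) x
          = fip (Pc \<circ> E (Suc n)) (lb_vs br (Pc \<circ> A n) ?Q) x
            + (- dt) * fip (Pc \<circ> E (Suc n)) (lb_vs br (Pc \<circ> E (Suc n)) ?Q) x"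
        unfolding PA1 lbvs_add lbvs_scale fip_add2 fip_scale2 by simp
      also have "\<dots> = fip (Pc \<circ> E (Suc n)) (lb_vs br (Pc \<circ> A n) ?Q) x"
        using fip_self_zero[OF assms(1,2)] by simp
      also have "\<dots> = f0 x + dt * g x"
        unfolding f0_def g_def PE0 fip_add1 fip_scale1 by (simp add: o_def)
      finally show ?thesis .
    qed
    have int0: "set_integrable lborel U f0" unfolding f0_def
      by (rule fip_integrable[OF bU sU gPc gPg])
    have intg: "set_integrable lborel U g" unfolding g_def
      by (rule fip_integrable[OF bU sU gPc gPg])
    have I: "intU U (fip (Pc \<circ> E (Suc n)) (lb_vs br (Pc \<circ> A (Suc n)) ?Q)) = intU U f0 + dt * intU U g"
    proof -
      have "intU U (fip (Pc \<circ> E (Suc n)) (lb_vs br (Pc \<circ> A (Suc n)) ?Q)) = (LINT x:U|lborel. f0 x + dt * g x)"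
        unfolding intU_def pw by simp
      also have "\<dots> = (LINT x:U|lborel. f0 x) + (LINT x:U|lborel. dt * g x)"
        by (rule set_integral_add(2)[OF int0]) (use intg in simp)
      finally show ?thesis unfolding intU_def by simp
    qed
    have T: "tip ipc (E (Suc n)) (Gh \<circ> q) = tip ipc (E n) (Gh \<circ> q) + dt * tip ipc dE (Gh \<circ> q)"
      unfolding E1 tip_add1[OF bip] tip_scale1[OF bip] by simp
    have "constraintC br U Gh Pg Pc ipc A E (Suc n) q
        = constraintC br U Gh Pg Pc ipc A E n q
          + dt * (tip ipc dE (Gh \<circ> q) + intU U (fip (Pc \<circ> dE) (lb_vs br (Pc \<circ> A n) (Pg \<circ> q))))"
      unfolding constraintC_def T I f0_def g_def by (simp add: algebra_simps)
    then show ?thesis using iii by simp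
  qed
  show ?thesis
  proof (intro ballI allI impI)
    fix q :: "'g \<Rightarrow> 'xg" and n assume "q \<in> tensor" "n \<le> N"
    then show "constraintC br U Gh Pg Pc ipc A E n q = constraintC br U Gh Pg Pc ipc A E 0 q"
      by (induction n) (auto simp: step)
  qed
qed

end
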